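(* Let $A\in\mathbb{R}^{n\times n}$ be Hurwitz, $B\in\mathbb{R}^{n\times m}$, $C\in\mathbb{R}^{p\times n}$, $\bar T>0$, and let $\hat A\in\mathbb{R}^{r\times r}$, $\hat B\in\mathbb{R}^{r\times m}$, $\hat C\in\mathbb{R}^{p\times r}$ be such that the reduced system $(\hat A,\hat B,\hat C)$ is a locally optimal approximation of $(A,B,C)$ with respect to the time-limited $\mathcal H_2$-norm, i.e. $(\hat A,\hat B,\hat C)$ is a local minimizer, among all reduced matrices of these sizes, of $\int_0^{\bar T}\|Ce^{As}B-\hat Ce^{\hat As}\hat B\|_F^2\,ds$. Assume $\hat A$ is diagonalizable, $\hat A=S^{-1}DS$ with $D=\operatorname{diag}(\lambda_1,\dots,\lambda_r)$, that $D$ and $-D$ have no common eigenvalues and that $D$ and $-A$ have no common eigenvalues. Set $\tilde B=S\hat B$, $\tilde C=\hat CS^{-1}$, and let $\tilde P_{\bar T},\tilde P_{2,\bar T},\tilde Q_{\bar T},\tilde Q_{2,\bar T},\tilde Q_\infty,\tilde Q_{2,\infty}$ be the solutions of $$A \tilde P_{2, {\bar T}}+ \tilde P_{2, {\bar T}} D =-B \tilde B^T+e^{A \bar T}B \tilde B^T e^{D \bar T},\qquad D\tilde P_{\bar T}+\tilde P_{\bar T} D =-\tilde B \tilde B^T+e^{D \bar T}\tilde B \tilde B^T e^{D \bar T},$$ $$D \tilde Q_{2, {\bar T}}+ \tilde Q_{2, {\bar T}} A =-\tilde C^T C+e^{D \bar T} \tilde C^T C e^{A \bar T},\qquad D \tilde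 Q_{\bar T}+\tilde Q_{\bar T} D =-\tilde C^T \tilde C+e^{D \bar T}\tilde C^T \tilde C e^{D \bar T},$$ $$D \tilde Q_{\infty}+\tilde Q_{\infty} D =-\tilde C^T \tilde C,\qquad D \tilde Q_{2, {\infty}}+ \tilde Q_{2, {\infty}} A =-\tilde C^T C.$$ Then (1) $\tilde C \tilde P_{\bar T} = C \tilde P_{2, \bar T}$; (2) $\tilde Q_{\bar T}\tilde B = \tilde Q_{2, \bar T} B$; (3) for all $i\in\{1,\dots,r\}$: $e_i^T\tilde Q_{2, \infty}[\tilde P_{2, {\bar T}}-\bar T e^{A\bar T}B \tilde B^T e^{D \bar T}]e_i= e_i^T\tilde Q_{\infty}[\tilde P_{\bar T}-\bar Te^{D \bar T}\tilde B \tilde B^T e^{D \bar T}]e_i$. Equivalently (with all displayed inverses assumed to exist), $$(I\otimes \hat C) \left[(I\otimes \hat A)+(D\otimes I)\right]^{-1}(e^{D \bar T}\tilde B \otimes e^{\hat A \bar T}\hat B -\tilde B \otimes \hat B) \operatorname{vec}(I) = (I\otimes C) \left[(I\otimes A)+(D\otimes I)\right]^{-1} (e^{D \bar T}\tilde B \otimes e^{ A \bar T} B -\tilde B \otimes B) \operatorname{vec}(I),$$ $$(\hat B^T\otimes I) \left[(I\otimes D)+(\hat A^T\otimes I)\right]^{-1}(e^{\hat A^T \bar T}\hat C^T \otimes e^{D \bar T}\tilde C^T-\hat C^T \otimes \tilde C^T)\operatorname{vec}(I) = (B^T\otimes I) \left[(I\otimes D)+(A^T\otimes I)\right]^{-1}(e^{A^T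 \bar T} C^T \otimes e^{D \bar T}\tilde C^T-C^T \otimes \tilde C^T)\operatorname{vec}(I),$$ and for all $i=1,\ldots,r$ $$\operatorname{vec}^T(I) (\hat C \otimes \tilde C) \left[(I\otimes D)+(\hat A\otimes I)\right]^{-1} (I\otimes e_i e_i^T)\Big( \left[(I\otimes D)+(\hat A\otimes I)\right]^{-1} (e^{\hat A \bar T}\hat B \otimes e^{D \bar T}\tilde B -\hat B \otimes \tilde B)- (\bar Te^{\hat A \bar T}\hat B \otimes e^{D \bar T}\tilde B) \Big)\operatorname{vec}(I)$$ $$=\operatorname{vec}^T(I) ( C \otimes \tilde C) \left[(I\otimes D)+(A\otimes I)\right]^{-1} (I\otimes e_i e_i^T)\Big( \left[(I\otimes D)+(A\otimes I)\right]^{-1} (e^{A \bar T} B \otimes e^{D \bar T}\tilde B -B \otimes \tilde B)-(\bar Te^{A \bar T}B \otimes e^{D \bar T}\tilde B)\Big) \operatorname{vec}(I).$$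
   Context: $e_i$ is the $i$-th column of an identity matrix, $I$ denotes identity matrices of suitable sizes, $\otimes$ is the Kronecker product, $\operatorname{vec}$ stacks the columns of a matrix into a vector, $\operatorname{vec}^T(I)=(\operatorname{vec}(I))^T$, $\|\cdot\|_F$ is the Frobenius norm. Transposes are plain (not conjugate) transposes even when $S$, $D$ are complex. *)

theory Defs
  imports "HOL-Analysis.Analysis"
begin

text \<open>Matrices are elements of 'a^'c^'r (rows indexed by 'r, columns by 'c).
  Matrix product is (**), transpose is the plain transpose.\<close>

primrec matpow :: "('a::semiring_1)^'n^'n \<Rightarrow> nat \<Rightarrow> 'a^'n^'n" where
  "matpow M 0 = mat 1"
| "matpow M (Suc k) = M ** matpow M k"

text \<open>Matrix exponential e^{M t} as the exponential power series.\<close>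
definition mexp :: "('a::real_normed_algebra_1)^'n^'n \<Rightarrow> real \<Rightarrow> 'a^'n^'n" where
  "mexp M t = (\<Sum>k. (t ^ k / fact k) *\<^sub>R matpow M k)"

text \<open>Entrywise embedding of a real matrix into complex matrices.\<close>
definition cmat :: "real^'c^'r \<Rightarrow> complex^'c^'r" where
  "cmat M = (\<chi> i j. complex_of_real (M $ i $ j))"

text \<open>Eigenvalue of a complex square matrix.\<close>
definition ceigenvalue :: "complex^'n^'n \<Rightarrow> complex \<Rightarrow> bool" where
  "ceigenvalue M l \<longleftrightarrow> (\<exists>v. v \<noteq> 0 \<and> M *v v = l *s v)"

text \<open>Hurwitz: every (complex) eigenvalue has negative real part.\<close>
definition hurwitz :: "real^'n^'n \<Rightarrow> bool" where
  "hurwitz A \<longleftrightarrow> (\<forall>l. ceigenvalue (cmat A) l \<longrightarrow> Re l < 0)"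

text \<open>Time-limited H2 error functional
  \<integral>_0^T ||C e^{As} B - Ch e^{Ah s} Bh||_F^2 ds.  The norm on real^'m^'p is the
  Euclidean norm of all entries, i.e. the Frobenius norm.\<close>
definition tlh2_err ::
  "real^'n^'n \<Rightarrow> real^'m^'n \<Rightarrow> real^'n^'p \<Rightarrow> real \<Rightarrow>
   real^'r^'r \<Rightarrow> real^'m^'r \<Rightarrow> real^'r^'p \<Rightarrow> real" where
  "tlh2_err A B C T Ah Bh Ch =
     integral {0..T} (\<lambda>s. (norm (C ** mexp A s ** B - Ch ** mexp Ah s ** Bh))\<^sup>2)"

text \<open>Local minimizer over all real reduced triples of the same sizes.\<close>
definition tlh2_locally_optimal ::
  "real^'n^'n \<Rightarrow> real^'m^'n \<Rightarrow> real^'n^'p \<Rightarrow> real \<Rightarrow>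
   real^'r^'r \<Rightarrow> real^'m^'r \<Rightarrow> real^'r^'p \<Rightarrow> bool" where
  "tlh2_locally_optimal A B C T Ah Bh Ch \<longleftrightarrow>
     (\<exists>\<epsilon>>0. \<forall>(Ah'::real^'r^'r) (Bh'::real^'m^'r) (Ch'::real^'r^'p).
        norm (Ah' - Ah) + norm (Bh' - Bh) + norm (Ch' - Ch) < \<epsilon> \<longrightarrow>
        tlh2_err A B C T Ah Bh Ch \<le> tlh2_err A B C T Ah' Bh' Ch')"

end

theory Submission
  imports Defs
begin


typedef (overloaded) ('a, 'n) sqm = "UNIV :: ('a::{euclidean_space,real_normed_field}^'n::finite^'n) set"
  morphisms mrep mabs by auto

setup_lifting type_definition_sqm

lemma matrix_add_rdistrib: "(A + B) ** C = A ** C + B ** (C::'a::semiring_1^_^_)"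
  by (vector matrix_matrix_mult_def sum.distrib field_simps)

lemma scaleR_mv: "(r *\<^sub>R (A::'a::real_algebra_1^'n^'m)) *v x = r *\<^sub>R (A *v x)"
  by (simp add: matrix_vector_mult_def vec_eq_iff scaleR_sum_right)

lemma mvec_bl: "bounded_linear ((*v) (M::'a::{euclidean_space,real_normed_field}^'n::finite^'m::finite))"
  by simp

lemma onorm_scaleR_mv: "onorm ((*v) (r *\<^sub>R (A::'a::{euclidean_space,real_normed_field}^'n::finite^'m::finite))) = \<bar>r\<bar> * onorm ((*v) A)"
proof -
  have "(*v) (r *\<^sub>R A) = (\<lambda>x. r *\<^sub>R (A *v x))" by (rule ext) (rule scaleR_mv)
  thus ?thesis by (simp add: onorm_scaleR[OF mvec_bl])
qed

instantiation sqm :: ("{euclidean_space,real_normed_field}", finite) real_normed_algebra_1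
begin
lift_definition zero_sqm :: "('a,'b) sqm" is "0 :: 'a^'b^'b" .
lift_definition one_sqm :: "('a,'b) sqm" is "mat 1 :: 'a^'b^'b" .
lift_definition plus_sqm :: "('a,'b) sqm \<Rightarrow> ('a,'b) sqm \<Rightarrow> ('a,'b) sqm" is "(+) :: 'a^'b^'b \<Rightarrow> _" .
lift_definition minus_sqm :: "('a,'b) sqm \<Rightarrow> ('a,'b) sqm \<Rightarrow> ('a,'b) sqm" is "(-) :: 'a^'b^'b \<Rightarrow> _" .
lift_definition uminus_sqm :: "('a,'b) sqm \<Rightarrow> ('a,'b) sqm" is "uminus :: 'a^'b^'b \<Rightarrow> _" .
lift_definition times_sqm :: "('a,'b) sqm \<Rightarrow> ('a,'b) sqm \<Rightarrow> ('a,'b) sqm" is "(**) :: 'a^'b^'b \<Rightarrow> _" .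
lift_definition scaleR_sqm :: "real \<Rightarrow> ('a,'b) sqm \<Rightarrow> ('a,'b) sqm" is "scaleR :: real \<Rightarrow> 'a^'b^'b \<Rightarrow> _" .
lift_definition norm_sqm :: "('a,'b) sqm \<Rightarrow> real" is "\<lambda>M::'a^'b^'b. onorm ((*v) M)" .
definition dist_sqm :: "('a,'b) sqm \<Rightarrow> ('a,'b) sqm \<Rightarrow> real" where "dist_sqm a b = norm (a - b)"
definition sgn_sqm :: "('a,'b) sqm \<Rightarrow> ('a,'b) sqm" where "sgn_sqm x = scaleR (inverse (norm x)) x"
definition uniformity_sqm :: "(('a,'b) sqm \<times> ('a,'b) sqm) filter" where
  "uniformity_sqm = (INF e\<in>{0 <..}. principal {(x, y). dist x y < e})"
definition open_sqm :: "('a,'b) sqm set \<Rightarrow> bool" where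
  "open_sqm S = (\<forall>x\<in>S. \<forall>\<^sub>F (x', y) in uniformity. x' = x \<longrightarrow> y \<in> S)"
instance
proof
  fix a b c :: "('a,'b) sqm" and r s :: real
  show "a + b + c = a + (b + c)" by transfer (simp add: algebra_simps)
  show "a + b = b + a" by transfer (simp add: algebra_simps)
  show "0 + a = a" by transfer simp
  show "- a + a = 0" by transfer simp
  show "a - b = a + - b" by transfer simp
  show "r *\<^sub>R (a + b) = r *\<^sub>R a + r *\<^sub>R b" by transfer (simp add: algebra_simps)
  show "(r + s) *\<^sub>R a = r *\<^sub>R a + s *\<^sub>R a" by transfer (simp add: algebra_simps)
  show "r *\<^sub>R s *\<^sub>R a = (r * s) *\<^sub>R a" by transfer simp
  show "1 *\<^sub>R a = a" by transfer simp
  show "a * b * c = a * (b * c)" by transfer (simp add: matrix_mul_assoc)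
  show "1 * a = a" by transfer simp
  show "a * 1 = a" by transfer simp
  show "(a + b) * c = a * c + b * c" by transfer (simp add: matrix_add_rdistrib)
  show "a * (b + c) = a * b + a * c" by transfer (simp add: matrix_add_ldistrib)
  show "(0::('a,'b) sqm) \<noteq> 1" by transfer (simp add: mat_def vec_eq_iff)
  show "r *\<^sub>R a * b = r *\<^sub>R (a * b)" by transfer (rule scalar_matrix_assoc[symmetric])
  show "a * r *\<^sub>R b = r *\<^sub>R (a * b)" by transfer (metis matrix_scalar_ac scalar_matrix_assoc)
  show "dist a b = norm (a - b)" by (simp add: dist_sqm_def)
  show "sgn a = inverse (norm a) *\<^sub>R a" by (simp add: sgn_sqm_def)
  show "uniformity = (INF e\<in>{0<..}. principal {(x, y). dist (x::('a,'b) sqm) y < e})"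
    by (simp add: uniformity_sqm_def)
  show "open U = (\<forall>x\<in>U. \<forall>\<^sub>F (x', y) in uniformity. x' = x \<longrightarrow> y \<in> U)" for U :: "('a,'b) sqm set"
    by (simp add: open_sqm_def)
  show "norm a = 0 \<longleftrightarrow> a = 0"
    by transfer (auto simp: onorm_eq_0 matrix_eq)
  show "norm (a + b) \<le> norm a + norm b"
    by transfer (simp add: onorm_triangle[OF mvec_bl mvec_bl, unfolded matrix_vector_mult_add_rdistrib[symmetric]])
  show "norm (r *\<^sub>R a) = \<bar>r\<bar> * norm a"
    by transfer (rule onorm_scaleR_mv)
  show "norm (a * b) \<le> norm a * norm b"
    by transfer (metis (no_types, lifting) comp_def onorm_compose[OF mvec_bl mvec_bl] matrix_vector_mul_assoc ext)
  show "norm (1::('a,'b) sqm) = 1"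
    proof transfer
    have "(*v) (mat 1 :: 'a^'b^'b) = (\<lambda>x. x)" by (rule ext) simp
    thus "onorm ((*v) (mat 1 :: 'a^'b^'b)) = 1" by (simp add: onorm_id)
  qed
qed
end

lemma norm_axis_gen: "norm (axis j (1::'a::real_normed_algebra_1) :: 'a^'n::finite) = 1"
  proof -
  have "(\<Sum>i\<in>UNIV. (norm ((axis j (1::'a) :: 'a^'n) $ i))\<^sup>2) = (\<Sum>i\<in>UNIV. if i = j then 1 else 0)"
    by (rule sum.cong) (auto simp: axis_def)
  thus ?thesis by (simp add: norm_vec_def L2_set_def)
qed

lemma entry_le_onorm: "norm ((M::'a::{euclidean_space,real_normed_field}^'n::finite^'m::finite) $ i $ j) \<le> onorm ((*v) M)"
proof -
  have "(M *v axis j 1) $ i = M $ i $ j"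
    by (simp add: matrix_vector_mult_def axis_def if_distrib cong: if_cong)
  hence "norm (M $ i $ j) \<le> norm (M *v axis j 1)" using Finite_Cartesian_Product.norm_nth_le[of "M *v axis j 1" i] by metis
  also have "\<dots> \<le> onorm ((*v) M) * norm (axis j (1::'a))" by (rule onorm[OF mvec_bl])
  finally show ?thesis by (simp add: norm_axis_gen)
qed

lemma vec_norm_le_sum: "norm (x::'a::real_normed_vector^'n::finite) \<le> (\<Sum>i\<in>UNIV. norm (x $ i))"
  by (simp add: norm_vec_def L2_set_le_sum)

lemma onorm_le_entries: "onorm ((*v) (M::'a::{euclidean_space,real_normed_field}^'n::finite^'m::finite)) \<le> (\<Sum>i\<in>UNIV. \<Sum>j\<in>UNIV. norm (M $ i $ j))"
proof (rule onorm_le)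
  fix x :: "'a^'n"
  have "norm (M *v x) \<le> (\<Sum>i\<in>UNIV. norm ((M *v x) $ i))" by (rule vec_norm_le_sum)
  also have "\<dots> \<le> (\<Sum>i\<in>UNIV. \<Sum>j\<in>UNIV. norm (M $ i $ j) * norm x)"
  proof (rule sum_mono)
    fix i
    have "norm ((M *v x) $ i) = norm (\<Sum>j\<in>UNIV. M $ i $ j * x $ j)" by (simp add: matrix_vector_mult_def)
    also have "\<dots> \<le> (\<Sum>j\<in>UNIV. norm (M $ i $ j * x $ j))" by (rule norm_sum)
    also have "\<dots> \<le> (\<Sum>j\<in>UNIV. norm (M $ i $ j) * norm x)"
      by (rule sum_mono) (simp add: norm_mult mult_left_mono[OF Finite_Cartesian_Product.norm_nth_le] norm_ge_zero)
    finally show "norm ((M *v x) $ i) \<le> (\<Sum>j\<in>UNIV. norm (M $ i $ j) * norm x)" .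
  qed
  finally show "norm (M *v x) \<le> (\<Sum>i\<in>UNIV. \<Sum>j\<in>UNIV. norm (M $ i $ j)) * norm x"
    by (simp add: sum_distrib_right)
qed

lemma norm_sqm_entry: "norm (mrep X $ i $ j) \<le> norm X"
  by (simp add: norm_sqm.rep_eq entry_le_onorm)

lemma norm_sqm_le_entries: "norm X \<le> (\<Sum>i\<in>UNIV. \<Sum>j\<in>UNIV. norm (mrep X $ i $ j))"
  by (simp add: norm_sqm.rep_eq onorm_le_entries)

lemma mrep_minus: "mrep (a - b) = mrep a - mrep b" by transfer simp

instance sqm :: ("{euclidean_space,real_normed_field}", finite) banach
proof
  fix X :: "nat \<Rightarrow> ('a,'b) sqm"
  assume C: "Cauchy X"
  have "Cauchy (\<lambda>k. mrep (X k) $ i $ j)" for i j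
    unfolding Cauchy_def
  proof (intro allI impI)
    fix e :: real assume "e > 0"
    then obtain M where M: "\<forall>m\<ge>M. \<forall>n\<ge>M. dist (X m) (X n) < e" using C unfolding Cauchy_def by blast
    show "\<exists>M. \<forall>m\<ge>M. \<forall>n\<ge>M. dist (mrep (X m) $ i $ j) (mrep (X n) $ i $ j) < e"
    proof (intro exI allI impI)
      fix m n assume "M \<le> m" "M \<le> n"
      have "dist (mrep (X m) $ i $ j) (mrep (X n) $ i $ j) = norm (mrep (X m - X n) $ i $ j)"
        by (simp add: dist_norm mrep_minus)
      also have "\<dots> \<le> dist (X m) (X n)" by (simp add: dist_norm norm_sqm_entry)
      also have "\<dots> < e" using M \<open>M \<le> m\<close> \<open>M \<le> n\<close> by blast
      finally show "dist (mrep (X m) $ i $ j) (mrep (X n) $ i $ j) < e" .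
    qed
  qed
  then have "Cauchy (\<lambda>k. mrep (X k))" by (intro vec_CauchyI) 
  then obtain L where L: "(\<lambda>k. mrep (X k)) \<longlonglongrightarrow> L" using Cauchy_convergent_iff convergent_def by blast
  have "(\<lambda>k. \<Sum>i\<in>UNIV. \<Sum>j\<in>UNIV. norm (mrep (X k) $ i $ j - L $ i $ j)) \<longlonglongrightarrow> (\<Sum>i\<in>UNIV. \<Sum>j\<in>UNIV. norm (L $ i $ j - L $ i $ j))"
    by (intro tendsto_intros L)
  hence T0: "(\<lambda>k. \<Sum>i\<in>UNIV. \<Sum>j\<in>UNIV. norm (mrep (X k) $ i $ j - L $ i $ j)) \<longlonglongrightarrow> 0" by simp
  have "(\<lambda>k. norm (X k - mabs L)) \<longlonglongrightarrow> 0"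
  proof (rule real_tendsto_sandwich[OF _ _ tendsto_const T0])
    show "\<forall>\<^sub>F n in sequentially. 0 \<le> norm (X n - mabs L)" by simp
    show "\<forall>\<^sub>F n in sequentially. norm (X n - mabs L) \<le> (\<Sum>i\<in>UNIV. \<Sum>j\<in>UNIV. norm (mrep (X n) $ i $ j - L $ i $ j))"
      using norm_sqm_le_entries[of "X _ - mabs L"] by (simp add: mrep_minus mabs_inverse)
  qed
  hence "X \<longlonglongrightarrow> mabs L"
    by (simp add: tendsto_norm_zero_iff LIM_zero_iff)
  thus "convergent X" by (rule convergentI)
qed

lemma mrep_times: "mrep (a * b) = mrep a ** mrep b" by transfer simp
lemma mrep_one: "mrep 1 = mat 1" by transfer simp
lemma mrep_add: "mrep (a + b) = mrep a + mrep b" by transfer simp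
lemma mrep_scaleR: "mrep (r *\<^sub>R a) = r *\<^sub>R mrep a" by transfer simp
lemma mrep_power: "mrep (a ^ k) = matpow (mrep a) k"
  by (induct k) (simp_all add: mrep_one mrep_times)

lemma bl_mrep: "bounded_linear (mrep :: ('a::{euclidean_space,real_normed_field},'n::finite) sqm \<Rightarrow> _)"
proof
  show "mrep (a + b) = mrep a + mrep b" for a b :: "('a,'n) sqm" by (rule mrep_add)
  show "mrep (r *\<^sub>R a) = r *\<^sub>R mrep a" for r and a :: "('a,'n) sqm" by (rule mrep_scaleR)
  show "\<exists>K. \<forall>x::('a,'n) sqm. norm (mrep x) \<le> norm x * K"
  proof (intro exI allI)
    fix x :: "('a,'n) sqm"
    have "norm (mrep x) \<le> (\<Sum>i\<in>UNIV. norm (mrep x $ i))" by (rule vec_norm_le_sum)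
    also have "\<dots> \<le> (\<Sum>i\<in>(UNIV::'n set). \<Sum>j\<in>(UNIV::'n set). norm x)"
      by (intro sum_mono order_trans[OF vec_norm_le_sum] norm_sqm_entry)
    also have "\<dots> = norm x * (real CARD('n) * real CARD('n))" by simp
    finally show "norm (mrep x) \<le> norm x * (real CARD('n) * real CARD('n))" .
  qed
qed

lemma mexp_sums: "(\<lambda>k. (t ^ k / fact k) *\<^sub>R matpow (M::'a::{euclidean_space,real_normed_field}^'n::finite^'n) k) sums mrep (exp (t *\<^sub>R mabs M))"
proof -
  have "(\<lambda>n. mrep ((t *\<^sub>R mabs M) ^ n /\<^sub>R fact n)) sums mrep (exp (t *\<^sub>R mabs M))"
    by (rule bounded_linear.sums[OF bl_mrep exp_converges])
  moreover have "mrep ((t *\<^sub>R mabs M) ^ n /\<^sub>R fact n) = (t ^ n / fact n) *\<^sub>R matpow M n" for n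
    by (simp add: mrep_scaleR mrep_power mabs_inverse divide_inverse_commute)
  ultimately show ?thesis by simp
qed

lemma mexp_eq: "mexp M t = mrep (exp (t *\<^sub>R mabs (M::'a::{euclidean_space,real_normed_field}^'n::finite^'n)))"
  unfolding mexp_def using mexp_sums by (rule sums_unique[symmetric])

lemma mexp_sums': "(\<lambda>k. (t ^ k / fact k) *\<^sub>R matpow (M::'a::{euclidean_space,real_normed_field}^'n::finite^'n) k) sums mexp M t"
  using mexp_sums[of t M] by (simp add: mexp_eq)

lemma mexp_linear_transfer:
  fixes M :: "'a::{euclidean_space,real_normed_field}^'n::finite^'n"
    and N :: "'b::{euclidean_space,real_normed_field}^'m::finite^'m"
  assumes "bounded_linear f" and "\<And>k. f (matpow M k) = matpow N k"
  shows "f (mexp M t) = mexp N t"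
proof -
  have "(\<lambda>k. f ((t ^ k / fact k) *\<^sub>R matpow M k)) sums f (mexp M t)"
    by (rule bounded_linear.sums[OF assms(1) mexp_sums'])
  hence "(\<lambda>k. (t ^ k / fact k) *\<^sub>R matpow N k) sums f (mexp M t)"
    using assms by (simp add: linear_scale[OF bounded_linear.linear[OF assms(1)]])
  thus ?thesis using mexp_sums'[of t N] sums_unique2 by blast
qed

lemma mabs_times: "mabs (a ** b) = mabs a * mabs b" by (simp add: times_sqm.abs_eq)

lemma mexp_deriv:
  "((\<lambda>t. mexp M t) has_vector_derivative (M ** mexp M t)) (at t within U)"
  for M :: "'a::{euclidean_space,real_normed_field}^'n::finite^'n"
proof -
  have "((\<lambda>t. mrep (exp (t *\<^sub>R mabs M))) has_vector_derivative mrep (mabs M * exp (t *\<^sub>R mabs M))) (at t within U)"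
    by (rule bounded_linear.has_vector_derivative[OF bl_mrep has_vector_derivative_at_within[OF exp_scaleR_has_vector_derivative_left]])
  thus ?thesis by (simp add: mexp_eq[abs_def] mrep_times mabs_inverse mexp_eq)
qed

lemma mexp_commute: "M ** mexp M t = mexp M t ** M"
  for M :: "'a::{euclidean_space,real_normed_field}^'n::finite^'n"
proof -
  have "mrep (mabs M * exp (t *\<^sub>R mabs M)) = mrep (exp (t *\<^sub>R mabs M) * mabs M)"
    by (simp add: exp_times_scaleR_commute)
  thus ?thesis by (simp add: mexp_eq mrep_times mabs_inverse)
qed

lemma mexp_zero: "mexp M 0 = mat 1"
  for M :: "'a::{euclidean_space,real_normed_field}^'n::finite^'n"
  by (simp add: mexp_eq mrep_one)

lemma mexp_scale: "mexp (c *\<^sub>R M) t = mexp M (t * c)"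
  for M :: "'a::{euclidean_space,real_normed_field}^'n::finite^'n"
  by (simp add: mexp_eq scaleR_sqm.abs_eq[symmetric] mabs_inverse)

lemma mexp_add: "M ** N = N ** M \<Longrightarrow> mexp (M + N) t = mexp M t ** mexp N t"
  for M N :: "'a::{euclidean_space,real_normed_field}^'n::finite^'n"
proof -
  assume c: "M ** N = N ** M"
  have "(t *\<^sub>R mabs M) * (t *\<^sub>R mabs N) = (t *\<^sub>R mabs N) * (t *\<^sub>R mabs M)"
    using c by (simp add: mabs_times[symmetric])
  hence "exp (t *\<^sub>R mabs M + t *\<^sub>R mabs N) = exp (t *\<^sub>R mabs M) * exp (t *\<^sub>R mabs N)"
    by (rule exp_add_commuting)
  moreover have "mabs (M + N) = mabs M + mabs N" by (simp add: plus_sqm.abs_eq)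
  ultimately show ?thesis by (simp add: mexp_eq mrep_times scaleR_add_right)
qed

lemma mexp_cont: "continuous_on U (mexp M)"
  for M :: "'a::{euclidean_space,real_normed_field}^'n::finite^'n"
  by (metis continuous_at_imp_continuous_on has_vector_derivative_continuous mexp_deriv)



lemma deriv_zero:
  fixes F F' :: "real \<Rightarrow> real \<Rightarrow> 'v::euclidean_space"
  assumes D: "\<And>t s. ((\<lambda>t. F t s) has_vector_derivative F' t s) (at t)"
    and cF: "continuous_on UNIV (\<lambda>(t,s). F t s)"
    and cF': "continuous_on UNIV (\<lambda>(t,s). F' t s)"
    and d: "d > 0"
    and m: "\<And>t. \<bar>t\<bar> < d \<Longrightarrow> integral {0..T} (\<lambda>s. (norm (F 0 s))\<^sup>2) \<le> integral {0..T} (\<lambda>s. (norm (F t s))\<^sup>2)"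
  shows "integral {0..T} (\<lambda>s. inner (F 0 s) (F' 0 s)) = 0"
proof -
  have cs: "continuous_on UNIV (\<lambda>s. F t s)" for t
  proof -
    have "continuous_on UNIV ((\<lambda>(t,s). F t s) \<circ> (\<lambda>s. (t,s)))"
      by (rule continuous_on_compose) (auto intro!: continuous_intros continuous_on_subset[OF cF])
    thus ?thesis by (simp add: o_def)
  qed
  have cs': "continuous_on UNIV (\<lambda>s. F' t s)" for t
  proof -
    have "continuous_on UNIV ((\<lambda>(t,s). F' t s) \<circ> (\<lambda>s. (t,s)))"
      by (rule continuous_on_compose) (auto intro!: continuous_intros continuous_on_subset[OF cF'])
    thus ?thesis by (simp add: o_def)
  qed
  have fx: "((\<lambda>x. (norm (F x s))\<^sup>2) has_field_derivative 2 * inner (F t s) (F' t s)) (at t within UNIV)" for t s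
  proof -
    have "((\<lambda>x. inner (F x s) (F x s)) has_vector_derivative (inner (F t s) (F' t s) + inner (F' t s) (F t s))) (at t)"
      by (rule bounded_bilinear.has_vector_derivative[OF bounded_bilinear_inner D D])
    moreover have "(\<lambda>x. (norm (F x s))\<^sup>2) = (\<lambda>x. inner (F x s) (F x s))" by (simp add: power2_norm_eq_inner)
    moreover have "inner (F t s) (F' t s) + inner (F' t s) (F t s) = 2 * inner (F t s) (F' t s)"
      by (metis inner_commute mult_2)
    ultimately show ?thesis
      unfolding has_real_derivative_iff_has_vector_derivative by simp
  qed
  have int: "(\<lambda>s. (norm (F x s))\<^sup>2) integrable_on cbox 0 T" for x
    by (rule integrable_continuous) (intro continuous_intros continuous_on_subset[OF cs[of x]], simp)
  have cfx: "continuous_on (UNIV \<times> cbox 0 T) (\<lambda>(x, t). 2 * inner (F x t) (F' x t))"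
  proof -
    have e: "(\<lambda>(x, t). 2 * inner (F x t) (F' x t)) = (\<lambda>p. 2 * inner ((\<lambda>(t,s). F t s) p) ((\<lambda>(t,s). F' t s) p))"
      by auto
    show ?thesis unfolding e
      by (intro continuous_intros continuous_on_subset[OF cF] continuous_on_subset[OF cF']) auto
  qed
  have "((\<lambda>x. integral (cbox 0 T) (\<lambda>s. (norm (F x s))\<^sup>2)) has_field_derivative
      integral (cbox 0 T) (\<lambda>s. 2 * inner (F 0 s) (F' 0 s))) (at 0 within UNIV)"
    by (rule leibniz_rule_field_derivative[OF fx int cfx]) auto
  hence "integral (cbox 0 T) (\<lambda>s. 2 * inner (F 0 s) (F' 0 s)) = 0"
    by (rule DERIV_local_min[OF _ d]) (use m in \<open>auto simp: cbox_interval\<close>)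
  thus ?thesis by (simp add: cbox_interval)
qed



lemma mm_bilinear: "bilinear ((**) :: 'a::{euclidean_space,real_normed_field}^'n::finite^'m::finite \<Rightarrow> 'a^'p::finite^'n \<Rightarrow> 'a^'p^'m)"
  unfolding bilinear_def linear_iff
  by (auto simp: matrix_add_ldistrib matrix_add_rdistrib matrix_scalar_ac scalar_matrix_assoc)

lemma mm_bb: "bounded_bilinear ((**) :: 'a::{euclidean_space,real_normed_field}^'n::finite^'m::finite \<Rightarrow> 'a^'p::finite^'n \<Rightarrow> 'a^'p^'m)"
  using mm_bilinear bilinear_conv_bounded_bilinear by blast

lemmas mm_cont [continuous_intros] = bounded_bilinear.continuous_on[OF mm_bb]

lemma mm_vderiv:
  fixes f :: "real \<Rightarrow> 'a::{euclidean_space,real_normed_field}^'n::finite^'m::finite"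
    and g :: "real \<Rightarrow> 'a^'p::finite^'n"
  assumes "(f has_vector_derivative f') (at x within s)" "(g has_vector_derivative g') (at x within s)"
  shows "((\<lambda>x. f x ** g x) has_vector_derivative (f x ** g' + f' ** g x)) (at x within s)"
  by (rule bounded_bilinear.has_vector_derivative[OF mm_bb assms])

lemma mexp_cont' [continuous_intros]:
  fixes M :: "'a::{euclidean_space,real_normed_field}^'n::finite^'n"
  shows "continuous_on S f \<Longrightarrow> continuous_on S (\<lambda>s. mexp M (f s))"
  by (rule continuous_on_compose2[OF mexp_cont[of UNIV M]]) auto

lemma mexp_deriv_r:
  "((\<lambda>t. mexp M t) has_vector_derivative (mexp M t ** M)) (at t within U)"
  for M :: "'a::{euclidean_space,real_normed_field}^'n::finite^'n"
  using mexp_deriv[of M t U] by (simp add: mexp_commute)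

lemma bl_mm_left: "bounded_linear (\<lambda>X. K ** (X::'a::{euclidean_space,real_normed_field}^'p::finite^'n::finite) :: 'a^'p^'m::finite)"
  by (rule bounded_bilinear.bounded_linear_right[OF mm_bb])
lemma bl_mm_right: "bounded_linear (\<lambda>X. (X::'a::{euclidean_space,real_normed_field}^'n::finite^'m::finite) ** K :: 'a^'p::finite^'m)"
  by (rule bounded_bilinear.bounded_linear_left[OF mm_bb])

lemma integral_mm_left:
  fixes f :: "real \<Rightarrow> 'a::{euclidean_space,real_normed_field}^'p::finite^'n::finite" and K :: "'a^'n^'m::finite"
  assumes "f integrable_on S"
  shows "integral S (\<lambda>s. K ** f s) = K ** integral S f"
  using integral_linear[OF assms bl_mm_left[of K]] by (simp add: o_def)

lemma integral_mm_right:
  fixes f :: "real \<Rightarrow> 'a::{euclidean_space,real_normed_field}^'n::finite^'m::finite" and K :: "'a^'p::finite^'n"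
  assumes "f integrable_on S"
  shows "integral S (\<lambda>s. f s ** K) = integral S f ** K"
  using integral_linear[OF assms bl_mm_right[of K]] by (simp add: o_def)

lemma integrable_mm_left:
  fixes f :: "real \<Rightarrow> 'a::{euclidean_space,real_normed_field}^'p::finite^'n::finite" and K :: "'a^'n^'m::finite"
  assumes "f integrable_on S"
  shows "(\<lambda>s. K ** f s) integrable_on S"
  using integrable_linear[OF assms bl_mm_left[of K]] by (simp add: o_def)

lemma integrable_mm_right:
  fixes f :: "real \<Rightarrow> 'a::{euclidean_space,real_normed_field}^'n::finite^'m::finite" and K :: "'a^'p::finite^'n"
  assumes "f integrable_on S"
  shows "(\<lambda>s. f s ** K) integrable_on S"
  using integrable_linear[OF assms bl_mm_right[of K]] by (simp add: o_def)

(* matpow *)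
lemma matpow_commute: "matpow M k ** M = M ** matpow M k"
proof (induct k)
  case (Suc k) thus ?case by (metis matpow.simps(2) matrix_mul_assoc)
qed simp

lemma matpow_transpose: "transpose (matpow (M::'a::comm_semiring_1^'n::finite^'n) k) = matpow (transpose M) k"
  by (induct k) (simp_all add: matrix_transpose_mul matpow_commute)

lemma matpow_conj:
  assumes "S ** Sinv = mat 1" "Sinv ** S = mat 1"
  shows "matpow (Sinv ** M ** S) k = Sinv ** matpow M k ** (S::'a::semiring_1^'n::finite^'n)"
proof (induct k)
  case 0 then show ?case using assms by simp
next
  case (Suc k)
  have "Sinv ** M ** S ** (Sinv ** matpow M k ** S) = Sinv ** M ** (S ** Sinv) ** matpow M k ** S"
    by (simp add: matrix_mul_assoc)
  then show ?case using Suc assms by (simp add: matrix_mul_assoc)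
qed

lemma bl_transpose: "bounded_linear (transpose :: 'a::{euclidean_space,real_normed_field}^'n::finite^'m::finite \<Rightarrow> _)"
  unfolding linear_conv_bounded_linear[symmetric] linear_iff
  by (simp add: transpose_def vec_eq_iff)

lemma mexp_transpose: "transpose (mexp M t) = mexp (transpose M) t"
  for M :: "'a::{euclidean_space,real_normed_field}^'n::finite^'n"
  by (rule mexp_linear_transfer[OF bl_transpose matpow_transpose])

lemma bl_conj: "bounded_linear (\<lambda>X. (A::'a::{euclidean_space,real_normed_field}^'n::finite^'m::finite) ** X ** (B::'a^'p::finite^'n) :: 'a^'p^'m)"
  by (rule bounded_linear_compose[OF bl_mm_right bl_mm_left])

lemma mexp_conj:
  assumes "S ** Sinv = mat 1" "Sinv ** S = mat 1"
  shows "mexp (Sinv ** M ** S) t = Sinv ** mexp M t ** (S::'a::{euclidean_space,real_normed_field}^'n::finite^'n)"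
  using mexp_linear_transfer[where f="\<lambda>X. Sinv ** X ** S" and M=M and N="Sinv ** M ** S", OF bl_conj] matpow_conj[OF assms] by simp

(* cmat *)
lemma cmat_mm: "cmat (A ** B) = cmat A ** cmat B"
  by (simp add: cmat_def matrix_matrix_mult_def vec_eq_iff)
lemma cmat_add: "cmat (A + B) = cmat A + cmat B"
  by (simp add: cmat_def vec_eq_iff)
lemma cmat_diff: "cmat (A - B) = cmat A - cmat B"
  by (simp add: cmat_def vec_eq_iff)
lemma cmat_scaleR: "cmat (r *\<^sub>R A) = r *\<^sub>R cmat A"
  by (simp add: cmat_def vec_eq_iff scaleR_conv_of_real[where 'a=complex])
lemma cmat_transpose: "cmat (transpose A) = transpose (cmat A)"
  by (simp add: cmat_def transpose_def vec_eq_iff)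
lemma cmat_one: "cmat (mat 1) = mat 1"
  by (simp add: cmat_def mat_def vec_eq_iff)
lemma cmat_zero: "cmat 0 = 0"
  by (simp add: cmat_def vec_eq_iff)
lemma cmat_uminus: "cmat (- A) = - cmat A"
  by (simp add: cmat_def vec_eq_iff)
lemma bl_cmat: "bounded_linear (cmat :: real^'c::finite^'r::finite \<Rightarrow> _)"
  unfolding linear_conv_bounded_linear[symmetric] linear_iff
  by (simp add: cmat_add cmat_scaleR)
lemma cmat_matpow: "cmat (matpow A k) = matpow (cmat A) k"
  by (induct k) (simp_all add: cmat_one cmat_mm)
lemma cmat_mexp: "cmat (mexp A t) = mexp (cmat A) t"
  by (rule mexp_linear_transfer[OF bl_cmat cmat_matpow])

lemma integral_cmat:
  fixes f :: "real \<Rightarrow> real^'c::finite^'r::finite"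
  assumes "f integrable_on S"
  shows "integral S (\<lambda>s. cmat (f s)) = cmat (integral S f)"
  using integral_linear[OF assms bl_cmat] by (simp add: o_def)

(* frob *)
definition frob :: "'a::comm_ring_1^'c::finite^'r::finite \<Rightarrow> 'a^'c^'r \<Rightarrow> 'a" where
  "frob X Y = (\<Sum>k\<in>UNIV. \<Sum>l\<in>UNIV. X $ k $ l * Y $ k $ l)"

lemma sum3_swap: "(\<Sum>k\<in>A. \<Sum>l\<in>B. \<Sum>n\<in>C. f k l n) = (\<Sum>n\<in>C. \<Sum>l\<in>B. \<Sum>k\<in>A. f k l n)"
proof -
  have "(\<Sum>k\<in>A. \<Sum>l\<in>B. \<Sum>n\<in>C. f k l n) = (\<Sum>k\<in>A. \<Sum>n\<in>C. \<Sum>l\<in>B. f k l n)"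
    by (rule sum.cong[OF refl], rule sum.swap)
  also have "\<dots> = (\<Sum>n\<in>C. \<Sum>k\<in>A. \<Sum>l\<in>B. f k l n)" by (rule sum.swap)
  also have "\<dots> = (\<Sum>n\<in>C. \<Sum>l\<in>B. \<Sum>k\<in>A. f k l n)"
    by (rule sum.cong[OF refl], rule sum.swap)
  finally show ?thesis .
qed

lemma frob_mm1: "frob (A ** B) C = frob B (transpose A ** C)"
  unfolding frob_def matrix_matrix_mult_def transpose_def
  by (simp add: sum_distrib_left sum_distrib_right mult_ac) (rule sum3_swap)

lemma frob_mm2: "frob (A ** B) C = frob A (C ** transpose B)"
  unfolding frob_def matrix_matrix_mult_def transpose_def
  by (simp add: sum_distrib_left sum_distrib_right mult_ac) (rule sum.cong, simp, subst sum.swap, simp)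

lemma inner_frob: "inner (X::real^'c::finite^'r::finite) Y = frob X Y"
  by (simp add: inner_vec_def frob_def)

lemma frob_commute: "frob X Y = frob Y X"
  by (simp add: frob_def mult.commute)

lemma bl_frob: "bounded_linear (frob (E::real^'c::finite^'r::finite))"
  unfolding linear_conv_bounded_linear[symmetric] linear_iff
  by (simp add: frob_def sum.distrib algebra_simps sum_distrib_left)

definition unitm :: "'r \<Rightarrow> 'c \<Rightarrow> 'a::comm_ring_1^'c::finite^'r::finite" where
  "unitm k l = (\<chi> a b. if a = k \<and> b = l then 1 else 0)"

lemma frob_unitm: "frob (unitm k l) X = X $ k $ l"
proof -
  have "(\<Sum>ka\<in>UNIV. \<Sum>la\<in>UNIV. (if ka = k \<and> la = l then 1 else 0) * X $ ka $ la) = (\<Sum>ka\<in>UNIV. if ka = k then X $ k $ l else 0)"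
  proof (rule sum.cong[OF refl])
    fix ka show "(\<Sum>la\<in>UNIV. (if ka = k \<and> la = l then 1 else 0) * X $ ka $ la) = (if ka = k then X $ k $ l else 0)"
    proof (cases "ka = k")
      case True
      have "(\<Sum>la\<in>UNIV. (if ka = k \<and> la = l then 1 else 0) * X $ ka $ la) = (\<Sum>la\<in>UNIV. if la = l then X $ k $ l else 0)"
        by (rule sum.cong) (auto simp: True)
      thus ?thesis using True by simp
    qed simp
  qed
  thus ?thesis by (simp add: frob_def unitm_def)
qed

lemma frob_zero_imp: "(\<And>E. frob E X = 0) \<Longrightarrow> X = 0"
  by (metis frob_unitm vec_eq_iff zero_index)

lemma integral_frob:
  fixes f :: "real \<Rightarrow> real^'c::finite^'r::finite"
  assumes "f integrable_on S"
  shows "integral S (\<lambda>s. frob E (f s)) = frob E (integral S f)"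
  using integral_linear[OF assms bl_frob] by (simp add: o_def)



lemma scaleR_mm_left: "s *\<^sub>R (K ** X) = K ** (s *\<^sub>R (X::'a::real_algebra_1^_^_))"
  by (metis matrix_scalar_ac scalar_matrix_assoc)
lemma scaleR_mm_right: "s *\<^sub>R (X ** K) = (s *\<^sub>R (X::'a::real_algebra_1^_^_)) ** K"
  by (rule scalar_matrix_assoc)

lemma syl_ftc:
  fixes K1 :: "'a::{euclidean_space,real_normed_field}^'n::finite^'n" and K2 :: "'a^'m::finite^'m" and C0 :: "'a^'m^'n"
  assumes T: "T \<ge> 0"
  shows "K1 ** integral {0..T} (\<lambda>s. mexp K1 s ** C0 ** mexp K2 s) + integral {0..T} (\<lambda>s. mexp K1 s ** C0 ** mexp K2 s) ** K2
           = mexp K1 T ** C0 ** mexp K2 T - C0"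
    and "K1 ** integral {0..T} (\<lambda>s. s *\<^sub>R (mexp K1 s ** C0 ** mexp K2 s)) + integral {0..T} (\<lambda>s. s *\<^sub>R (mexp K1 s ** C0 ** mexp K2 s)) ** K2
           = T *\<^sub>R (mexp K1 T ** C0 ** mexp K2 T) - integral {0..T} (\<lambda>s. mexp K1 s ** C0 ** mexp K2 s)"
proof -
  define F where "F = (\<lambda>s. mexp K1 s ** C0 ** mexp K2 s)"
  have dF: "(F has_vector_derivative (K1 ** F s + F s ** K2)) (at s within U)" for s U
  proof -
    have d1: "((\<lambda>s. mexp K1 s ** C0) has_vector_derivative (mexp K1 s ** 0 + (K1 ** mexp K1 s) ** C0)) (at s within U)"
      by (rule mm_vderiv[OF mexp_deriv has_vector_derivative_const])
    have "(F has_vector_derivative (mexp K1 s ** C0 ** (mexp K2 s ** K2) + (mexp K1 s ** 0 + (K1 ** mexp K1 s) ** C0) ** mexp K2 s)) (at s within U)"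
      unfolding F_def by (rule mm_vderiv[OF d1 mexp_deriv_r])
    moreover have "mexp K1 s ** C0 ** (mexp K2 s ** K2) + (mexp K1 s ** 0 + (K1 ** mexp K1 s) ** C0) ** mexp K2 s = K1 ** F s + F s ** K2"
      by (simp add: F_def matrix_mul_assoc add.commute)
    ultimately show ?thesis by simp
  qed
  have cF: "continuous_on S F" for S
    unfolding F_def by (intro continuous_intros)
  have iF: "F integrable_on {0..T}" by (rule integrable_continuous_interval[OF cF])
  have iG: "(\<lambda>s. s *\<^sub>R F s) integrable_on {0..T}"
    by (rule integrable_continuous_interval) (intro continuous_intros cF)
  have "((\<lambda>s. K1 ** F s + F s ** K2) has_integral (F T - F 0)) {0..T}"
    by (rule fundamental_theorem_of_calculus[OF T dF])
  hence "integral {0..T} (\<lambda>s. K1 ** F s + F s ** K2) = F T - F 0" by (rule integral_unique)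
  moreover have "integral {0..T} (\<lambda>s. K1 ** F s + F s ** K2) = K1 ** integral {0..T} F + integral {0..T} F ** K2"
    by (simp add: integral_add integrable_mm_left integrable_mm_right iF integral_mm_left integral_mm_right)
  ultimately show "K1 ** integral {0..T} (\<lambda>s. mexp K1 s ** C0 ** mexp K2 s) + integral {0..T} (\<lambda>s. mexp K1 s ** C0 ** mexp K2 s) ** K2
           = mexp K1 T ** C0 ** mexp K2 T - C0"
    by (simp add: F_def mexp_zero)
  have dG: "((\<lambda>s. s *\<^sub>R F s) has_vector_derivative (s *\<^sub>R (K1 ** F s + F s ** K2) + 1 *\<^sub>R F s)) (at s within U)" for s U
    by (rule has_vector_derivative_scaleR[OF _ dF]) (auto intro!: derivative_eq_intros)
  have e: "s *\<^sub>R (K1 ** F s + F s ** K2) + 1 *\<^sub>R F s = (K1 ** (s *\<^sub>R F s) + (s *\<^sub>R F s) ** K2) + F s" for s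
    by (simp add: scaleR_add_right scaleR_mm_left scaleR_mm_right matrix_scalar_ac)
  have "((\<lambda>s. (K1 ** (s *\<^sub>R F s) + (s *\<^sub>R F s) ** K2) + F s) has_integral (T *\<^sub>R F T - 0 *\<^sub>R F 0)) {0..T}"
    using fundamental_theorem_of_calculus[OF T dG] by (simp only: e)
  hence "integral {0..T} (\<lambda>s. (K1 ** (s *\<^sub>R F s) + (s *\<^sub>R F s) ** K2) + F s) = T *\<^sub>R F T" by (simp add: integral_unique)
  moreover have "integral {0..T} (\<lambda>s. (K1 ** (s *\<^sub>R F s) + (s *\<^sub>R F s) ** K2) + F s)
      = K1 ** integral {0..T} (\<lambda>s. s *\<^sub>R F s) + integral {0..T} (\<lambda>s. s *\<^sub>R F s) ** K2 + integral {0..T} F"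
  proof -
    have i1: "(\<lambda>s. K1 ** (s *\<^sub>R F s)) integrable_on {0..T}" by (rule integrable_mm_left[OF iG])
    have i2: "(\<lambda>s. (s *\<^sub>R F s) ** K2) integrable_on {0..T}" by (rule integrable_mm_right[OF iG])
    have i3: "(\<lambda>s. K1 ** (s *\<^sub>R F s) + (s *\<^sub>R F s) ** K2) integrable_on {0..T}" by (rule integrable_add[OF i1 i2])
    show ?thesis
      by (simp only: integral_add[OF i3 iF] integral_add[OF i1 i2] integral_mm_left[OF iG] integral_mm_right[OF iG])
  qed
  ultimately show "K1 ** integral {0..T} (\<lambda>s. s *\<^sub>R (mexp K1 s ** C0 ** mexp K2 s)) + integral {0..T} (\<lambda>s. s *\<^sub>R (mexp K1 s ** C0 ** mexp K2 s)) ** K2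
           = T *\<^sub>R (mexp K1 T ** C0 ** mexp K2 T) - integral {0..T} (\<lambda>s. mexp K1 s ** C0 ** mexp K2 s)"
    unfolding F_def by (simp add: algebra_simps)
qed



lemma diag_mm_right:
  assumes "\<forall>i j. i \<noteq> j \<longrightarrow> D $ i $ j = (0::'a::comm_ring_1)"
  shows "(Y ** D) $ a $ b = Y $ a $ b * D $ b $ b"
proof -
  have "(Y ** D) $ a $ b = (\<Sum>k\<in>UNIV. Y $ a $ k * D $ k $ b)" by (simp add: matrix_matrix_mult_def)
  also have "\<dots> = (\<Sum>k\<in>UNIV. if k = b then Y $ a $ k * D $ k $ b else 0)"
    by (rule sum.cong) (auto simp: assms)
  finally show ?thesis by simp
qed

lemma diag_mm_left:
  assumes "\<forall>i j. i \<noteq> j \<longrightarrow> D $ i $ j = (0::'a::comm_ring_1)"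
  shows "(D ** Y) $ a $ b = D $ a $ a * Y $ a $ b"
proof -
  have "(D ** Y) $ a $ b = (\<Sum>k\<in>UNIV. D $ a $ k * Y $ k $ b)" by (simp add: matrix_matrix_mult_def)
  also have "\<dots> = (\<Sum>k\<in>UNIV. if k = a then D $ a $ k * Y $ k $ b else 0)"
    by (rule sum.cong) (auto simp: assms)
  finally show ?thesis by simp
qed

lemma mat_mv: "mat c *v z = c *s (z::'a::comm_ring_1^'n::finite)"
proof -
  have "(mat c *v z) $ i = (\<Sum>j\<in>UNIV. (if i = j then c else 0) * z $ j)" for i
    by (simp add: matrix_vector_mult_def mat_def)
  also have "\<dots> i = (\<Sum>j\<in>UNIV. if j = i then c * z $ j else 0)" for i
    by (rule sum.cong) auto
  finally have "(mat c *v z) $ i = (\<Sum>j\<in>UNIV. if j = i then c * z $ j else 0)" for i .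
  thus ?thesis by (simp add: vec_eq_iff)
qed

lemma mat_vm: "z v* mat c = c *s (z::'a::comm_ring_1^'n::finite)"
proof -
  have "(z v* mat c) $ i = (\<Sum>j\<in>UNIV. z $ j * (if j = i then c else 0))" for i
    by (simp add: vector_matrix_mult_def mat_def)
  also have "\<dots> i = (\<Sum>j\<in>UNIV. if j = i then c * z $ j else 0)" for i
    by (rule sum.cong) auto
  finally have "(z v* mat c) $ i = (\<Sum>j\<in>UNIV. if j = i then c * z $ j else 0)" for i .
  thus ?thesis by (simp add: vec_eq_iff)
qed

lemma syl_DD:
  fixes D :: "complex^'r::finite^'r" and Y :: "complex^'r^'r"
  assumes diag: "\<forall>i j. i \<noteq> j \<longrightarrow> D $ i $ j = 0" and DmD: "\<forall>i j. D $ i $ i + D $ j $ j \<noteq> 0"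
    and eq: "D ** Y + Y ** D = 0"
  shows "Y = 0"
proof -
  have "(D $ a $ a + D $ b $ b) * Y $ a $ b = 0" for a b
    using arg_cong[OF eq, of "\<lambda>M. M $ a $ b"] by (simp add: diag_mm_left[OF diag] diag_mm_right[OF diag] algebra_simps)
  thus ?thesis using DmD by (simp add: vec_eq_iff)
qed

lemma syl_AD:
  fixes D :: "complex^'r::finite^'r" and K :: "complex^'n::finite^'n" and Y :: "complex^'r^'n"
  assumes diag: "\<forall>i j. i \<noteq> j \<longrightarrow> D $ i $ j = 0" and ev: "\<forall>j. \<not> ceigenvalue K (- (D $ j $ j))"
    and eq: "K ** Y + Y ** D = 0"
  shows "Y = 0"
proof -
  have "(\<chi> a. Y $ a $ j) = 0" for j
  proof -
    have "K *v (\<chi> a. Y $ a $ j) = (- (D $ j $ j)) *s (\<chi> a. Y $ a $ j)"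
    proof -
      have "(K ** Y) $ a $ j + Y $ a $ j * D $ j $ j = 0" for a
        using arg_cong[OF eq, of "\<lambda>M. M $ a $ j"] by (simp add: diag_mm_right[OF diag])
      thus ?thesis
        by (simp add: vec_eq_iff matrix_vector_mult_def matrix_matrix_mult_def algebra_simps eq_neg_iff_add_eq_0)
    qed
    thus ?thesis using ev unfolding ceigenvalue_def by blast
  qed
  thus ?thesis by (simp add: vec_eq_iff)
qed

lemma syl_DA:
  fixes D :: "complex^'r::finite^'r" and K :: "complex^'n::finite^'n" and Y :: "complex^'n^'r"
  assumes diag: "\<forall>i j. i \<noteq> j \<longrightarrow> D $ i $ j = 0" and ev: "\<forall>j. \<not> ceigenvalue K (- (D $ j $ j))"
    and eq: "D ** Y + Y ** K = 0"
  shows "Y = 0"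
proof -
  have "Y $ i = 0" for i
  proof -
    let ?c = "D $ i $ i"
    let ?N = "K + mat ?c"
    have inj: "inj ((*v) ?N)"
    proof (rule injI)
      fix x y assume "?N *v x = ?N *v y"
      hence "?N *v (x - y) = 0" by (simp add: matrix_vector_mult_diff_distrib)
      hence "K *v (x - y) + ?c *s (x - y) = 0" by (simp add: matrix_vector_mult_add_rdistrib mat_mv)
      hence "K *v (x - y) = (- ?c) *s (x - y)"
        by (simp add: vec_eq_iff eq_neg_iff_add_eq_0 algebra_simps)
      hence "x - y = 0" using ev[rule_format, of i] unfolding ceigenvalue_def by blast
      thus "x = y" by simp
    qed
    hence "surj ((*v) ?N)" by (rule vec.linear_inj_imp_surj[OF matrix_vector_mul_linear_gen])
    hence "invertible ?N" using inj by (simp add: invertible_eq_bij bij_def)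
    then obtain N' where N': "?N ** N' = mat 1" unfolding invertible_def by blast
    have "Y $ i v* ?N = 0"
    proof -
      have "(D ** Y) $ i $ b + (Y ** K) $ i $ b = 0" for b
        using arg_cong[OF eq, of "\<lambda>M. M $ i $ b"] by simp
      moreover have "(Y ** K) $ i $ b = (\<Sum>a\<in>UNIV. Y $ i $ a * K $ a $ b)" for b
        by (simp add: matrix_matrix_mult_def)
      ultimately have "?c * Y $ i $ b + (\<Sum>a\<in>UNIV. Y $ i $ a * K $ a $ b) = 0" for b
        by (metis diag_mm_left[OF diag])
      hence "Y $ i v* K + ?c *s Y $ i = 0"
        by (simp add: vec_eq_iff vector_matrix_mult_def algebra_simps)
      moreover have "Y $ i v* ?N = Y $ i v* K + ?c *s Y $ i" by (simp add: vector_matrix_mult_add_rdistrib mat_vm)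
      ultimately show ?thesis by simp
    qed
    hence "(Y $ i v* ?N) v* N' = 0" by simp
    thus ?thesis by (simp add: vector_matrix_mul_assoc N')
  qed
  thus ?thesis by (simp add: vec_eq_iff)
qed



lemma matrix_diff_rdistrib: "(A - B) ** C = A ** C - B ** (C::'a::ring_1^_^_)"
  by (vector matrix_matrix_mult_def sum_subtractf algebra_simps)
lemma matrix_diff_ldistrib: "C ** (A - B) = C ** A - C ** (B::'a::ring_1^_^_)"
  by (vector matrix_matrix_mult_def sum_subtractf algebra_simps)
lemma matrix_neg_rdistrib: "(- A) ** C = - (A ** (C::'a::ring_1^_^_))"
  by (vector matrix_matrix_mult_def sum_negf)
lemma matrix_neg_ldistrib: "C ** (- A) = - (C ** (A::'a::ring_1^_^_))"
  by (vector matrix_matrix_mult_def sum_negf)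

lemma frob_scaleR1: "frob (s *\<^sub>R E) X = s * frob (E::real^_^_) X"
  by (simp add: frob_def sum_distrib_left mult_ac)
lemma frob_scaleR2: "frob E (s *\<^sub>R X) = s * frob (E::real^_^_) X"
  by (simp add: frob_def sum_distrib_left mult_ac)

lemma continuous_on_cmat [continuous_intros]: "continuous_on S f \<Longrightarrow> continuous_on S (\<lambda>x. cmat (f x))"
  by (rule bounded_linear.continuous_on[OF bl_cmat])
lemma continuous_on_transpose [continuous_intros]:
  "continuous_on S f \<Longrightarrow> continuous_on S (\<lambda>x. transpose (f x :: 'a::{euclidean_space,real_normed_field}^'n::finite^'m::finite))"
  by (rule bounded_linear.continuous_on[OF bl_transpose])
lemma continuous_on_frob [continuous_intros]:
  "continuous_on S f \<Longrightarrow> continuous_on S (\<lambda>x. frob E (f x :: real^'n::finite^'m::finite))"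
  by (rule bounded_linear.continuous_on[OF bl_frob])

lemma opt_dir:
  fixes Z :: "real \<Rightarrow> 'v::euclidean_space" and G G' :: "real \<Rightarrow> real \<Rightarrow> 'v"
  assumes D: "\<And>t s. ((\<lambda>t. G t s) has_vector_derivative G' t s) (at t)"
    and G0: "\<And>s. G 0 s = 0"
    and cZ: "continuous_on UNIV Z"
    and cG: "continuous_on UNIV (\<lambda>(t,s). G t s)"
    and cG': "continuous_on UNIV (\<lambda>(t,s). G' t s)"
    and d: "d > 0"
    and m: "\<And>t. \<bar>t\<bar> < d \<Longrightarrow> integral {0..T} (\<lambda>s. (norm (Z s))\<^sup>2) \<le> integral {0..T} (\<lambda>s. (norm (Z s - G t s))\<^sup>2)"
  shows "integral {0..T} (\<lambda>s. inner (Z s) (G' 0 s)) = 0"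
proof -
  have cZ2: "continuous_on UNIV (\<lambda>(t,s). Z s)"
  proof -
    have "continuous_on UNIV (Z \<circ> snd)" by (rule continuous_on_compose) (auto intro!: continuous_intros cZ[THEN continuous_on_subset])
    thus ?thesis by (simp add: o_def split_beta)
  qed
  have "integral {0..T} (\<lambda>s. inner ((\<lambda>t s. Z s - G t s) 0 s) ((\<lambda>t s. - G' t s) 0 s)) = 0"
  proof (rule deriv_zero[OF _ _ _ d])
    show "((\<lambda>t. Z s - G t s) has_vector_derivative - G' t s) (at t)" for t s
      by (rule derivative_eq_intros D | simp)+
    show "continuous_on UNIV (\<lambda>(t, s). Z s - G t s)"
      using continuous_on_diff[OF cZ2 cG] by (simp add: split_beta)
    show "continuous_on UNIV (\<lambda>(t, s). - G' t s)"
      using continuous_on_minus[OF cG'] by (simp add: split_beta)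
    show "integral {0..T} (\<lambda>s. (norm (Z s - G 0 s))\<^sup>2) \<le> integral {0..T} (\<lambda>s. (norm (Z s - G t s))\<^sup>2)" if "\<bar>t\<bar> < d" for t
      using m[OF that] by (simp add: G0)
  qed
  thus ?thesis by (simp add: G0 integral_neg)
qed



lemma real_conds:
  fixes A :: "real^'n::finite^'n" and B :: "real^'m::finite^'n" and C :: "real^'n^'p::finite"
    and Ah :: "real^'r::finite^'r" and Bh :: "real^'m^'r" and Ch :: "real^'r^'p"
  assumes opt: "tlh2_locally_optimal A B C T Ah Bh Ch"
  defines "Z \<equiv> \<lambda>s. C ** mexp A s ** B - Ch ** mexp Ah s ** Bh"
  shows "integral {0..T} (\<lambda>s. Z s ** transpose (mexp Ah s ** Bh)) = 0"
    and "integral {0..T} (\<lambda>s. transpose (Ch ** mexp Ah s) ** Z s) = 0"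
    and "\<And>E. Ah ** E = E ** Ah \<Longrightarrow> frob E (integral {0..T} (\<lambda>s. s *\<^sub>R (transpose Ch ** (Z s ** transpose (mexp Ah s ** Bh))))) = 0"
proof -
  from opt obtain \<epsilon> where \<epsilon>: "\<epsilon> > 0" and
    min: "\<And>Ah' Bh' Ch'. norm (Ah' - Ah) + norm (Bh' - Bh) + norm (Ch' - Ch) < \<epsilon> \<Longrightarrow>
       tlh2_err A B C T Ah Bh Ch \<le> tlh2_err A B C T Ah' Bh' Ch'"
    unfolding tlh2_locally_optimal_def by blast
  have cZ: "continuous_on UNIV Z" unfolding Z_def by (intro continuous_intros)
  have err0: "tlh2_err A B C T Ah Bh Ch = integral {0..T} (\<lambda>s. (norm (Z s))\<^sup>2)"
    by (simp add: tlh2_err_def Z_def)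
  have dpos: "\<epsilon> / (norm E + 1) > 0" for E :: "'x::real_normed_vector" using \<epsilon> by (intro divide_pos_pos) (auto intro: add_nonneg_pos)
  have small: "\<bar>t\<bar> * norm E < \<epsilon>" if "\<bar>t\<bar> < \<epsilon> / (norm E + 1)" for t and E :: "'x::real_normed_vector"
  proof -
    have "\<bar>t\<bar> * norm E \<le> \<bar>t\<bar> * (norm E + 1)" by (simp add: mult_left_mono)
    also have "\<dots> < \<epsilon>"
    proof -
      have p: "0 < norm E + 1" by (simp add: add_nonneg_pos)
      show ?thesis using that by (simp add: pos_less_divide_eq[OF p])
    qed
    finally show ?thesis .
  qed
  (* direction Ch *)
  have R1: "integral {0..T} (\<lambda>s. inner (Z s) (E ** mexp Ah s ** Bh)) = 0" for E :: "real^'r^'p"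
  proof (rule opt_dir[where G="\<lambda>t s. t *\<^sub>R (E ** mexp Ah s ** Bh)", OF _ _ cZ _ _ dpos[of E]])
    show "((\<lambda>t. t *\<^sub>R (E ** mexp Ah s ** Bh)) has_vector_derivative E ** mexp Ah s ** Bh) (at t)" for t s
      by (rule derivative_eq_intros | simp)+
    show "continuous_on UNIV (\<lambda>(t, s). t *\<^sub>R (E ** mexp Ah s ** Bh))"
      by (auto simp: split_beta intro!: continuous_intros)
    show "continuous_on UNIV (\<lambda>(t, s). E ** mexp Ah s ** Bh)"
      by (auto simp: split_beta intro!: continuous_intros)
    fix t :: real assume t: "\<bar>t\<bar> < \<epsilon> / (norm E + 1)"
    have "norm (Ah - Ah) + norm (Bh - Bh) + norm ((Ch + t *\<^sub>R E) - Ch) < \<epsilon>" using small[OF t] by simp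
    from min[OF this] show "integral {0..T} (\<lambda>s. (norm (Z s))\<^sup>2) \<le> integral {0..T} (\<lambda>s. (norm (Z s - t *\<^sub>R (E ** mexp Ah s ** Bh)))\<^sup>2)"
      by (simp add: err0 tlh2_err_def Z_def matrix_add_rdistrib scalar_matrix_assoc algebra_simps)
  qed simp
  (* direction Bh *)
  have R2: "integral {0..T} (\<lambda>s. inner (Z s) (Ch ** mexp Ah s ** E)) = 0" for E :: "real^'m^'r"
  proof (rule opt_dir[where G="\<lambda>t s. t *\<^sub>R (Ch ** mexp Ah s ** E)", OF _ _ cZ _ _ dpos[of E]])
    show "((\<lambda>t. t *\<^sub>R (Ch ** mexp Ah s ** E)) has_vector_derivative Ch ** mexp Ah s ** E) (at t)" for t s
      by (rule derivative_eq_intros | simp)+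
    show "continuous_on UNIV (\<lambda>(t, s). t *\<^sub>R (Ch ** mexp Ah s ** E))"
      by (auto simp: split_beta intro!: continuous_intros)
    show "continuous_on UNIV (\<lambda>(t, s). Ch ** mexp Ah s ** E)"
      by (auto simp: split_beta intro!: continuous_intros)
    fix t :: real assume t: "\<bar>t\<bar> < \<epsilon> / (norm E + 1)"
    have "norm (Ah - Ah) + norm ((Bh + t *\<^sub>R E) - Bh) + norm (Ch - Ch) < \<epsilon>" using small[OF t] by simp
    from min[OF this] show "integral {0..T} (\<lambda>s. (norm (Z s))\<^sup>2) \<le> integral {0..T} (\<lambda>s. (norm (Z s - t *\<^sub>R (Ch ** mexp Ah s ** E)))\<^sup>2)"
      by (simp add: err0 tlh2_err_def Z_def matrix_add_ldistrib matrix_scalar_ac scalar_matrix_assoc algebra_simps)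
  qed simp
  (* direction Ah *)
  have R3': "integral {0..T} (\<lambda>s. inner (Z s) (Ch ** ((s *\<^sub>R E) ** mexp (s *\<^sub>R E) 0) ** mexp Ah s ** Bh)) = 0"
    if com: "Ah ** E = E ** Ah" for E :: "real^'r^'r"
  proof (rule opt_dir[where G="\<lambda>t s. Ch ** (mexp (s *\<^sub>R E) t - mat 1) ** mexp Ah s ** Bh"
        and G'="\<lambda>t s. Ch ** ((s *\<^sub>R E) ** mexp (s *\<^sub>R E) t) ** mexp Ah s ** Bh", OF _ _ cZ _ _ dpos[of E]])
    show "((\<lambda>t. Ch ** (mexp (s *\<^sub>R E) t - mat 1) ** mexp Ah s ** Bh) has_vector_derivative
        Ch ** ((s *\<^sub>R E) ** mexp (s *\<^sub>R E) t) ** mexp Ah s ** Bh) (at t)" for t s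
    proof -
      have "((\<lambda>t. mexp (s *\<^sub>R E) t - mat 1) has_vector_derivative (s *\<^sub>R E) ** mexp (s *\<^sub>R E) t) (at t)"
        by (rule derivative_eq_intros mexp_deriv | simp)+
      hence "((\<lambda>t. Ch ** (mexp (s *\<^sub>R E) t - mat 1) ** (mexp Ah s ** Bh)) has_vector_derivative
          Ch ** ((s *\<^sub>R E) ** mexp (s *\<^sub>R E) t) ** (mexp Ah s ** Bh)) (at t)"
        by (rule bounded_linear.has_vector_derivative[OF bl_conj])
      thus ?thesis by (simp add: matrix_mul_assoc)
    qed
    show "Ch ** (mexp (s *\<^sub>R E) 0 - mat 1) ** mexp Ah s ** Bh = 0" for s by (simp add: mexp_zero)
    show "continuous_on UNIV (\<lambda>(t, s). Ch ** (mexp (s *\<^sub>R E) t - mat 1) ** mexp Ah s ** Bh)"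
      by (auto simp: split_beta mexp_scale intro!: continuous_intros)
    show "continuous_on UNIV (\<lambda>(t, s). Ch ** ((s *\<^sub>R E) ** mexp (s *\<^sub>R E) t) ** mexp Ah s ** Bh)"
      by (auto simp: split_beta mexp_scale intro!: continuous_intros)
    fix t :: real assume t: "\<bar>t\<bar> < \<epsilon> / (norm E + 1)"
    have "norm ((Ah + t *\<^sub>R E) - Ah) + norm (Bh - Bh) + norm (Ch - Ch) < \<epsilon>" using small[OF t] by simp
    note mm = min[OF this]
    have "mexp (Ah + t *\<^sub>R E) s = mexp (s *\<^sub>R E) t ** mexp Ah s" for s
    proof -
      have "(t *\<^sub>R E) ** Ah = Ah ** (t *\<^sub>R E)" using com by (simp add: matrix_scalar_ac scalar_matrix_assoc[symmetric])
      hence "mexp (t *\<^sub>R E + Ah) s = mexp (t *\<^sub>R E) s ** mexp Ah s" by (rule mexp_add)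
      thus ?thesis by (simp add: add.commute mexp_scale mult.commute)
    qed
    hence "C ** mexp A s ** B - Ch ** mexp (Ah + t *\<^sub>R E) s ** Bh = Z s - Ch ** (mexp (s *\<^sub>R E) t - mat 1) ** mexp Ah s ** Bh" for s
      by (simp add: Z_def matrix_diff_rdistrib matrix_diff_ldistrib matrix_mul_assoc)
    with mm show "integral {0..T} (\<lambda>s. (norm (Z s))\<^sup>2) \<le> integral {0..T} (\<lambda>s. (norm (Z s - Ch ** (mexp (s *\<^sub>R E) t - mat 1) ** mexp Ah s ** Bh))\<^sup>2)"
      unfolding err0 by (simp add: tlh2_err_def)
  qed
  have R3: "integral {0..T} (\<lambda>s. inner (Z s) (Ch ** (s *\<^sub>R E) ** mexp Ah s ** Bh)) = 0"
    if com: "Ah ** E = E ** Ah" for E :: "real^'r^'r"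
    using R3'[OF com] by (simp add: mexp_zero)
  have iZ: "(\<lambda>s. f s ** Z s ** g s) integrable_on {0..T}" if "continuous_on UNIV f" "continuous_on UNIV g" for f :: "real \<Rightarrow> real^'p^'x::finite" and g :: "real \<Rightarrow> real^'y::finite^'m"
    by (rule integrable_continuous_interval) (intro continuous_intros continuous_on_subset[OF that(1)] continuous_on_subset[OF that(2)] continuous_on_subset[OF cZ], auto)
  show "integral {0..T} (\<lambda>s. Z s ** transpose (mexp Ah s ** Bh)) = 0"
  proof (rule frob_zero_imp)
    fix E :: "real^'r^'p"
    have i: "(\<lambda>s. Z s ** transpose (mexp Ah s ** Bh)) integrable_on {0..T}"
      by (rule integrable_continuous_interval) (intro continuous_intros continuous_on_subset[OF cZ], auto)
    have "frob E (integral {0..T} (\<lambda>s. Z s ** transpose (mexp Ah s ** Bh))) = integral {0..T} (\<lambda>s. inner (Z s) (E ** mexp Ah s ** Bh))"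
      by (subst integral_frob[OF i, symmetric]) (simp add: inner_frob frob_commute[of "Z _"] frob_mm2 matrix_mul_assoc matrix_transpose_mul)
    thus "frob E (integral {0..T} (\<lambda>s. Z s ** transpose (mexp Ah s ** Bh))) = 0" using R1 by simp
  qed
  show "integral {0..T} (\<lambda>s. transpose (Ch ** mexp Ah s) ** Z s) = 0"
  proof (rule frob_zero_imp)
    fix E :: "real^'m^'r"
    have i: "(\<lambda>s. transpose (Ch ** mexp Ah s) ** Z s) integrable_on {0..T}"
      by (rule integrable_continuous_interval) (intro continuous_intros continuous_on_subset[OF cZ], auto)
    have "frob E (integral {0..T} (\<lambda>s. transpose (Ch ** mexp Ah s) ** Z s)) = integral {0..T} (\<lambda>s. inner (Z s) (Ch ** mexp Ah s ** E))"
      by (subst integral_frob[OF i, symmetric]) (simp add: inner_frob frob_commute[of "Z _"] frob_mm1)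
    thus "frob E (integral {0..T} (\<lambda>s. transpose (Ch ** mexp Ah s) ** Z s)) = 0" using R2 by simp
  qed
  fix E :: "real^'r^'r" assume com: "Ah ** E = E ** Ah"
  have i: "(\<lambda>s. s *\<^sub>R (transpose Ch ** (Z s ** transpose (mexp Ah s ** Bh)))) integrable_on {0..T}"
    by (rule integrable_continuous_interval) (intro continuous_intros continuous_on_subset[OF cZ], auto)
  have "frob E (integral {0..T} (\<lambda>s. s *\<^sub>R (transpose Ch ** (Z s ** transpose (mexp Ah s ** Bh)))))
      = integral {0..T} (\<lambda>s. inner (Z s) (Ch ** (s *\<^sub>R E) ** mexp Ah s ** Bh))"
  proof -
    have "inner (Z s) (Ch ** (s *\<^sub>R E) ** mexp Ah s ** Bh) = frob E (s *\<^sub>R (transpose Ch ** (Z s ** transpose (mexp Ah s ** Bh))))" for s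
    proof -
      have "inner (Z s) (Ch ** (s *\<^sub>R E) ** mexp Ah s ** Bh) = frob (Ch ** (s *\<^sub>R E) ** mexp Ah s ** Bh) (Z s)"
        by (simp add: inner_frob frob_commute)
      also have "\<dots> = frob (Ch ** (s *\<^sub>R E)) (Z s ** transpose Bh ** transpose (mexp Ah s))"
        by (simp only: frob_mm2 matrix_mul_assoc)
      also have "\<dots> = frob (s *\<^sub>R E) (transpose Ch ** (Z s ** transpose Bh ** transpose (mexp Ah s)))"
        by (simp only: frob_mm1)
      also have "\<dots> = frob E (s *\<^sub>R (transpose Ch ** (Z s ** transpose (mexp Ah s ** Bh))))"
        by (simp add: frob_scaleR1 frob_scaleR2 matrix_transpose_mul matrix_mul_assoc)
      finally show ?thesis .
    qed
    thus ?thesis by (simp add: integral_frob[OF i, symmetric])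
  qed
  thus "frob E (integral {0..T} (\<lambda>s. s *\<^sub>R (transpose Ch ** (Z s ** transpose (mexp Ah s ** Bh))))) = 0"
    using R3[OF com] by simp
qed



lemma complexify:
  fixes Ah G :: "real^'r::finite^'r" and S Sinv D H :: "complex^'r^'r"
  assumes S_inv1: "S ** Sinv = mat 1" and S_inv2: "Sinv ** S = mat 1"
    and diag: "\<forall>i j. i \<noteq> j \<longrightarrow> D $ i $ j = 0"
    and Ah_diag: "cmat Ah = Sinv ** D ** S"
    and frobG: "\<And>E. Ah ** E = E ** Ah \<Longrightarrow> frob E G = 0"
    and cG: "cmat G = transpose S ** H ** transpose Sinv"
  shows "H $ i $ i = 0"
proof -
  define U :: "complex^'r^'r" where "U = unitm i i"
  define P where "P = Sinv ** U ** S"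
  have DU: "D ** U = U ** D"
    by (simp add: vec_eq_iff diag_mm_left[OF diag] diag_mm_right[OF diag] U_def unitm_def)
  have comm: "cmat Ah ** P = P ** cmat Ah"
  proof -
    have "cmat Ah ** P = Sinv ** D ** (S ** Sinv) ** U ** S" by (simp add: Ah_diag P_def matrix_mul_assoc)
    also have "\<dots> = Sinv ** (D ** U) ** S" by (simp add: S_inv1 matrix_mul_assoc)
    also have "\<dots> = Sinv ** U ** (S ** Sinv) ** D ** S" by (simp add: DU S_inv1 matrix_mul_assoc)
    also have "\<dots> = P ** cmat Ah" by (simp add: Ah_diag P_def matrix_mul_assoc)
    finally show ?thesis .
  qed
  define ER :: "real^'r^'r" where "ER = (\<chi> a b. Re (P $ a $ b))"
  define EI :: "real^'r^'r" where "EI = (\<chi> a b. Im (P $ a $ b))"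
  have ent: "(cmat Ah ** P) $ a $ b = (P ** cmat Ah) $ a $ b" for a b using comm by simp
  have "Ah ** ER = ER ** Ah"
  proof -
    have "Re ((cmat Ah ** P) $ a $ b) = Re ((P ** cmat Ah) $ a $ b)" for a b using ent by simp
    thus ?thesis by (simp add: vec_eq_iff ER_def matrix_matrix_mult_def cmat_def Re_sum mult.commute)
  qed
  hence fR: "frob ER G = 0" by (rule frobG)
  have "Ah ** EI = EI ** Ah"
  proof -
    have "Im ((cmat Ah ** P) $ a $ b) = Im ((P ** cmat Ah) $ a $ b)" for a b using ent by simp
    thus ?thesis by (simp add: vec_eq_iff EI_def matrix_matrix_mult_def cmat_def Im_sum mult.commute)
  qed
  hence fI: "frob EI G = 0" by (rule frobG)
  have "frob P (cmat G) = complex_of_real (frob ER G) + \<i> * complex_of_real (frob EI G)"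
  proof -
    have "P $ a $ b = complex_of_real (ER $ a $ b) + \<i> * complex_of_real (EI $ a $ b)" for a b
      by (simp add: ER_def EI_def complex_eq_iff)
    thus ?thesis
      by (simp add: frob_def cmat_def distrib_left distrib_right sum.distrib sum_distrib_left mult_ac)
  qed
  hence f0: "frob P (cmat G) = 0" using fR fI by simp
  have "frob P (cmat G) = frob U (transpose Sinv ** (transpose S ** H ** transpose Sinv) ** transpose S)"
    unfolding P_def cG by (subst frob_mm2, subst frob_mm1, simp add: matrix_mul_assoc)
  also have "transpose Sinv ** (transpose S ** H ** transpose Sinv) ** transpose S = H"
  proof -
    have t: "transpose Sinv ** transpose S = mat 1"
      using S_inv1 by (metis matrix_transpose_mul transpose_mat)
    have "transpose Sinv ** (transpose S ** H ** transpose Sinv) ** transpose S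
        = (transpose Sinv ** transpose S) ** H ** (transpose Sinv ** transpose S)"
      by (simp add: matrix_mul_assoc)
    thus ?thesis by (simp add: t)
  qed
  finally show ?thesis using f0 by (simp add: U_def frob_unitm)
qed



lemma syl_diff:
  fixes K1 :: "'a::comm_ring_1^'n::finite^'n" and K2 :: "'a^'m::finite^'m"
  assumes "K1 ** I + I ** K2 = F - C0" "K1 ** P + P ** K2 = - C0 + F"
  shows "K1 ** (I - P) + (I - P) ** K2 = 0"
proof -
  have "K1 ** (I - P) + (I - P) ** K2 = (K1 ** I + I ** K2) - (K1 ** P + P ** K2)"
    by (simp add: matrix_diff_ldistrib matrix_diff_rdistrib algebra_simps)
  also have "\<dots> = 0" using assms by simp
  finally show ?thesis .
qed

theorem theorem3p2:
  fixes A :: "real^'n^'n" and B :: "real^'m^'n" and C :: "real^'n^'p"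
    and Ah :: "real^'r^'r" and Bh :: "real^'m^'r" and Ch :: "real^'r^'p"
    and T :: real
    and S Sinv D :: "complex^'r^'r"
    and Bt :: "complex^'m^'r" and Ct :: "complex^'r^'p"
    and PT QT Qinf :: "complex^'r^'r"
    and P2T :: "complex^'r^'n" and Q2T Q2inf :: "complex^'n^'r"
  assumes hurw: "hurwitz A"
    and Tpos: "T > 0"
    and opt: "tlh2_locally_optimal A B C T Ah Bh Ch"
    and S_inv1: "S ** Sinv = mat 1" and S_inv2: "Sinv ** S = mat 1"
    and diag: "\<forall>i j. i \<noteq> j \<longrightarrow> D $ i $ j = 0"
    and Ah_diag: "cmat Ah = Sinv ** D ** S"
    and DmD: "\<forall>i j. D $ i $ i + D $ j $ j \<noteq> 0"
    and DmA: "\<forall>i. \<not> ceigenvalue (cmat A) (- (D $ i $ i))"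
    and Bt_def: "Bt = S ** cmat Bh"
    and Ct_def: "Ct = cmat Ch ** Sinv"
    and P2T_eq: "cmat A ** P2T + P2T ** D =
        - (cmat B ** transpose Bt) + mexp (cmat A) T ** cmat B ** transpose Bt ** mexp D T"
    and PT_eq: "D ** PT + PT ** D =
        - (Bt ** transpose Bt) + mexp D T ** Bt ** transpose Bt ** mexp D T"
    and Q2T_eq: "D ** Q2T + Q2T ** cmat A =
        - (transpose Ct ** cmat C) + mexp D T ** transpose Ct ** cmat C ** mexp (cmat A) T"
    and QT_eq: "D ** QT + QT ** D =
        - (transpose Ct ** Ct) + mexp D T ** transpose Ct ** Ct ** mexp D T"
    and Qinf_eq: "D ** Qinf + Qinf ** D = - (transpose Ct ** Ct)"
    and Q2inf_eq: "D ** Q2inf + Q2inf ** cmat A = - (transpose Ct ** cmat C)"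
  shows "Ct ** PT = cmat C ** P2T \<and> QT ** Bt = Q2T ** cmat B \<and>
         (\<forall>i. (Q2inf ** (P2T - T *\<^sub>R (mexp (cmat A) T ** cmat B ** transpose Bt ** mexp D T))) $ i $ i
           = (Qinf ** (PT - T *\<^sub>R (mexp D T ** Bt ** transpose Bt ** mexp D T))) $ i $ i)"
proof -
  let ?cA = "cmat A" and ?cB = "cmat B" and ?cC = "cmat C"
  have T0: "T \<ge> 0" using Tpos by simp
  have tS1: "transpose Sinv ** transpose S = mat 1"
    using S_inv1 by (metis matrix_transpose_mul transpose_mat)
  have tS2: "transpose S ** transpose Sinv = mat 1"
    using S_inv2 by (metis matrix_transpose_mul transpose_mat)
  have Ch_eq: "cmat Ch = Ct ** S" by (simp add: Ct_def matrix_mul_assoc[symmetric] S_inv2)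
  have Dsym: "transpose D = D"
    using diag by (simp add: vec_eq_iff transpose_def) (metis)
  have eDT: "transpose (mexp D s) = mexp D s" for s by (simp add: mexp_transpose Dsym)
  have eAh: "cmat (mexp Ah s) = Sinv ** mexp D s ** S" for s
    by (simp add: cmat_mexp Ah_diag mexp_conj[OF S_inv1 S_inv2])
  have cY: "cmat (mexp Ah s ** Bh) = Sinv ** mexp D s ** Bt" for s
    by (simp add: cmat_mm eAh Bt_def matrix_mul_assoc)
  have cW: "cmat (Ch ** mexp Ah s) = Ct ** mexp D s ** S" for s
  proof -
    have "cmat (Ch ** mexp Ah s) = Ct ** (S ** Sinv) ** mexp D s ** S"
      by (simp add: cmat_mm eAh Ch_eq matrix_mul_assoc)
    thus ?thesis by (simp add: S_inv1)
  qed
  define Z where "Z = (\<lambda>s. C ** mexp A s ** B - Ch ** mexp Ah s ** Bh)"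
  have cZ: "cmat (Z s) = ?cC ** mexp ?cA s ** ?cB - Ct ** mexp D s ** Bt" for s
  proof -
    have "cmat (Ch ** mexp Ah s ** Bh) = Ct ** mexp D s ** Bt"
      using cW[of s] by (simp add: cmat_mm Bt_def matrix_mul_assoc)
    thus ?thesis by (simp add: Z_def cmat_diff cmat_mm cmat_mexp)
  qed
  have contZ: "continuous_on UNIV Z" unfolding Z_def by (intro continuous_intros)
  define F2 where "F2 = (\<lambda>s. mexp ?cA s ** (?cB ** transpose Bt) ** mexp D s)"
  define F1 where "F1 = (\<lambda>s. mexp D s ** (Bt ** transpose Bt) ** mexp D s)"
  define F4 where "F4 = (\<lambda>s. mexp D s ** (transpose Ct ** ?cC) ** mexp ?cA s)"
  define F3 where "F3 = (\<lambda>s. mexp D s ** (transpose Ct ** Ct) ** mexp D s)"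
  have iF2: "F2 integrable_on {0..T}" unfolding F2_def by (intro integrable_continuous_interval continuous_intros)
  have iF1: "F1 integrable_on {0..T}" unfolding F1_def by (intro integrable_continuous_interval continuous_intros)
  have iF4: "F4 integrable_on {0..T}" unfolding F4_def by (intro integrable_continuous_interval continuous_intros)
  have iF3: "F3 integrable_on {0..T}" unfolding F3_def by (intro integrable_continuous_interval continuous_intros)
  have iF2s: "(\<lambda>s. s *\<^sub>R F2 s) integrable_on {0..T}" unfolding F2_def by (intro integrable_continuous_interval continuous_intros)
  have iF1s: "(\<lambda>s. s *\<^sub>R F1 s) integrable_on {0..T}" unfolding F1_def by (intro integrable_continuous_interval continuous_intros)
  (* Sylvester identifications *)
  have IP2: "integral {0..T} F2 = P2T"
  proof -
    have "?cA ** integral {0..T} F2 + integral {0..T} F2 ** D = F2 T - ?cB ** transpose Bt"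
      unfolding F2_def by (rule syl_ftc(1)[OF T0])
    moreover have "?cA ** P2T + P2T ** D = - (?cB ** transpose Bt) + F2 T" using P2T_eq by (simp add: F2_def matrix_mul_assoc)
    ultimately have "?cA ** (integral {0..T} F2 - P2T) + (integral {0..T} F2 - P2T) ** D = 0"
      by (rule syl_diff)
    hence "integral {0..T} F2 - P2T = 0" by (rule syl_AD[OF diag DmA])
    thus ?thesis by simp
  qed
  have IP1: "integral {0..T} F1 = PT"
  proof -
    have "D ** integral {0..T} F1 + integral {0..T} F1 ** D = F1 T - Bt ** transpose Bt"
      unfolding F1_def by (rule syl_ftc(1)[OF T0])
    moreover have "D ** PT + PT ** D = - (Bt ** transpose Bt) + F1 T" using PT_eq by (simp add: F1_def matrix_mul_assoc)
    ultimately have "D ** (integral {0..T} F1 - PT) + (integral {0..T} F1 - PT) ** D = 0"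
      by (rule syl_diff)
    hence "integral {0..T} F1 - PT = 0" by (rule syl_DD[OF diag DmD])
    thus ?thesis by simp
  qed
  have IQ2: "integral {0..T} F4 = Q2T"
  proof -
    have "D ** integral {0..T} F4 + integral {0..T} F4 ** ?cA = F4 T - transpose Ct ** ?cC"
      unfolding F4_def by (rule syl_ftc(1)[OF T0])
    moreover have "D ** Q2T + Q2T ** ?cA = - (transpose Ct ** ?cC) + F4 T" using Q2T_eq by (simp add: F4_def matrix_mul_assoc)
    ultimately have "D ** (integral {0..T} F4 - Q2T) + (integral {0..T} F4 - Q2T) ** ?cA = 0"
      by (rule syl_diff)
    hence "integral {0..T} F4 - Q2T = 0" by (rule syl_DA[OF diag DmA])
    thus ?thesis by simp
  qed
  have IQ1: "integral {0..T} F3 = QT"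
  proof -
    have "D ** integral {0..T} F3 + integral {0..T} F3 ** D = F3 T - transpose Ct ** Ct"
      unfolding F3_def by (rule syl_ftc(1)[OF T0])
    moreover have "D ** QT + QT ** D = - (transpose Ct ** Ct) + F3 T" using QT_eq by (simp add: F3_def matrix_mul_assoc)
    ultimately have "D ** (integral {0..T} F3 - QT) + (integral {0..T} F3 - QT) ** D = 0"
      by (rule syl_diff)
    hence "integral {0..T} F3 - QT = 0" by (rule syl_DD[OF diag DmD])
    thus ?thesis by simp
  qed
  note RC = real_conds[OF opt]
  have key1: "cmat (Z s ** transpose (mexp Ah s ** Bh)) = (?cC ** F2 s - Ct ** F1 s) ** transpose Sinv" for s
  proof -
    have "cmat (Z s ** transpose (mexp Ah s ** Bh)) = cmat (Z s) ** transpose (Sinv ** mexp D s ** Bt)"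
      by (simp only: cmat_mm[of "Z s"] cmat_transpose cY)
    thus ?thesis by (simp add: cZ matrix_transpose_mul eDT F2_def F1_def matrix_diff_rdistrib matrix_mul_assoc)
  qed
  have key2: "cmat (transpose (Ch ** mexp Ah s) ** Z s) = transpose S ** (F4 s ** ?cB - F3 s ** Bt)" for s
  proof -
    have "cmat (transpose (Ch ** mexp Ah s) ** Z s) = transpose (Ct ** mexp D s ** S) ** cmat (Z s)"
      by (simp only: cmat_mm[of "transpose (Ch ** mexp Ah s)"] cmat_transpose cW)
    thus ?thesis by (simp add: cZ matrix_transpose_mul eDT F4_def F3_def matrix_diff_ldistrib matrix_mul_assoc)
  qed
  (* (1) *)
  have c1: "Ct ** PT = ?cC ** P2T"
  proof -
    have i: "(\<lambda>s. Z s ** transpose (mexp Ah s ** Bh)) integrable_on {0..T}"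
      by (intro integrable_continuous_interval continuous_intros continuous_on_subset[OF contZ]) auto
    have "0 = cmat (integral {0..T} (\<lambda>s. Z s ** transpose (mexp Ah s ** Bh)))"
      using RC(1) by (simp add: cmat_zero Z_def)
    also have "\<dots> = integral {0..T} (\<lambda>s. (?cC ** F2 s - Ct ** F1 s) ** transpose Sinv)"
      by (simp add: integral_cmat[OF i, symmetric] key1)
    also have "\<dots> = (?cC ** P2T - Ct ** PT) ** transpose Sinv"
      by (simp add: integral_mm_right integrable_diff integrable_mm_left iF1 iF2 integral_diff
          integral_mm_left IP1 IP2)
    finally have "(?cC ** P2T - Ct ** PT) ** transpose Sinv ** transpose S = 0" by simp
    hence "?cC ** P2T - Ct ** PT = 0" by (simp add: matrix_mul_assoc[symmetric] tS1)
    thus ?thesis by simp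
  qed
  (* (2) *)
  have c2: "QT ** Bt = Q2T ** ?cB"
  proof -
    have i: "(\<lambda>s. transpose (Ch ** mexp Ah s) ** Z s) integrable_on {0..T}"
      by (intro integrable_continuous_interval continuous_intros continuous_on_subset[OF contZ]) auto
    have "0 = cmat (integral {0..T} (\<lambda>s. transpose (Ch ** mexp Ah s) ** Z s))"
      using RC(2) by (simp add: cmat_zero Z_def)
    also have "\<dots> = integral {0..T} (\<lambda>s. transpose S ** (F4 s ** ?cB - F3 s ** Bt))"
      by (simp add: integral_cmat[OF i, symmetric] key2)
    also have "\<dots> = transpose S ** (Q2T ** ?cB - QT ** Bt)"
      by (simp add: integral_mm_right integrable_diff integrable_mm_left integrable_mm_right iF3 iF4 integral_diff
          integral_mm_left IQ1 IQ2)
    finally have "transpose Sinv ** (transpose S ** (Q2T ** ?cB - QT ** Bt)) = 0" by simp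
    hence "Q2T ** ?cB - QT ** Bt = 0" by (simp add: matrix_mul_assoc tS1)
    thus ?thesis by simp
  qed
  (* (3) *)
  define R2 where "R2 = integral {0..T} (\<lambda>s. s *\<^sub>R F2 s)"
  define R1 where "R1 = integral {0..T} (\<lambda>s. s *\<^sub>R F1 s)"
  define H where "H = transpose Ct ** ?cC ** R2 - transpose Ct ** Ct ** R1"
  have sR2: "?cA ** R2 + R2 ** D = T *\<^sub>R F2 T - P2T"
    unfolding R2_def F2_def IP2[symmetric] F2_def by (rule syl_ftc(2)[OF T0])
  have sR1: "D ** R1 + R1 ** D = T *\<^sub>R F1 T - PT"
    unfolding R1_def F1_def IP1[symmetric] F1_def by (rule syl_ftc(2)[OF T0])
  have Hii: "H $ i $ i = 0" for i
  proof (rule complexify[OF S_inv1 S_inv2 diag Ah_diag])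
    show "frob E (integral {0..T} (\<lambda>s. s *\<^sub>R (transpose Ch ** (Z s ** transpose (mexp Ah s ** Bh))))) = 0"
      if "Ah ** E = E ** Ah" for E using RC(3)[OF that] by (simp add: Z_def)
    have i: "(\<lambda>s. s *\<^sub>R (transpose Ch ** (Z s ** transpose (mexp Ah s ** Bh)))) integrable_on {0..T}"
      by (intro integrable_continuous_interval continuous_intros continuous_on_subset[OF contZ]) auto
    have e: "cmat (s *\<^sub>R (transpose Ch ** (Z s ** transpose (mexp Ah s ** Bh))))
        = transpose S ** (transpose Ct ** ?cC ** (s *\<^sub>R F2 s) - transpose Ct ** Ct ** (s *\<^sub>R F1 s)) ** transpose Sinv" for s
    proof -
      have "cmat (s *\<^sub>R (transpose Ch ** (Z s ** transpose (mexp Ah s ** Bh))))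
          = s *\<^sub>R (transpose (Ct ** S) ** ((?cC ** F2 s - Ct ** F1 s) ** transpose Sinv))"
        by (simp add: cmat_scaleR cmat_mm cmat_transpose key1[symmetric] Ch_eq)
      also have "\<dots> = transpose S ** (transpose Ct ** ?cC ** (s *\<^sub>R F2 s) - transpose Ct ** Ct ** (s *\<^sub>R F1 s)) ** transpose Sinv"
        by (simp add: matrix_transpose_mul matrix_diff_ldistrib matrix_diff_rdistrib matrix_mul_assoc
            matrix_scalar_ac scalar_matrix_assoc scaleR_diff_right)
      finally show ?thesis .
    qed
    show "cmat (integral {0..T} (\<lambda>s. s *\<^sub>R (transpose Ch ** (Z s ** transpose (mexp Ah s ** Bh)))))
        = transpose S ** H ** transpose Sinv"
      by (simp add: integral_cmat[OF i, symmetric] e integral_mm_right integral_mm_left integrable_mm_left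
          integrable_mm_right integrable_diff iF1s iF2s integral_diff H_def R1_def R2_def)
  qed
  have c3: "(Q2inf ** (P2T - T *\<^sub>R (mexp ?cA T ** ?cB ** transpose Bt ** mexp D T))) $ i $ i
       = (Qinf ** (PT - T *\<^sub>R (mexp D T ** Bt ** transpose Bt ** mexp D T))) $ i $ i" for i
  proof -
    have d2: "(M ** D) $ i $ i = (D ** M) $ i $ i" for M :: "complex^'r^'r"
      by (simp add: diag_mm_left[OF diag] diag_mm_right[OF diag] mult.commute)
    have "P2T - T *\<^sub>R (mexp ?cA T ** ?cB ** transpose Bt ** mexp D T) = - (?cA ** R2 + R2 ** D)"
      using sR2 by (simp add: F2_def matrix_mul_assoc)
    hence "Q2inf ** (P2T - T *\<^sub>R (mexp ?cA T ** ?cB ** transpose Bt ** mexp D T))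
        = - ((Q2inf ** ?cA) ** R2) - (Q2inf ** R2) ** D"
      by (simp add: matrix_neg_ldistrib matrix_add_ldistrib matrix_diff_ldistrib matrix_mul_assoc)
    hence "(Q2inf ** (P2T - T *\<^sub>R (mexp ?cA T ** ?cB ** transpose Bt ** mexp D T))) $ i $ i
        = - ((Q2inf ** ?cA) ** R2) $ i $ i - (D ** (Q2inf ** R2)) $ i $ i"
      by (simp only: d2 vector_minus_component vector_uminus_component)
    also have "\<dots> = - ((Q2inf ** ?cA + D ** Q2inf) ** R2) $ i $ i"
      by (simp add: matrix_add_rdistrib matrix_mul_assoc)
    also have "\<dots> = (transpose Ct ** ?cC ** R2) $ i $ i"
    proof -
      have "Q2inf ** ?cA + D ** Q2inf = - (transpose Ct ** ?cC)" using Q2inf_eq by (simp add: add.commute)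
      thus ?thesis by (simp add: matrix_neg_rdistrib)
    qed
    finally have L: "(Q2inf ** (P2T - T *\<^sub>R (mexp ?cA T ** ?cB ** transpose Bt ** mexp D T))) $ i $ i
        = (transpose Ct ** ?cC ** R2) $ i $ i" .
    have "PT - T *\<^sub>R (mexp D T ** Bt ** transpose Bt ** mexp D T) = - (D ** R1 + R1 ** D)"
      using sR1 by (simp add: F1_def matrix_mul_assoc)
    hence "Qinf ** (PT - T *\<^sub>R (mexp D T ** Bt ** transpose Bt ** mexp D T))
        = - ((Qinf ** D) ** R1) - (Qinf ** R1) ** D"
      by (simp add: matrix_neg_ldistrib matrix_add_ldistrib matrix_diff_ldistrib matrix_mul_assoc)
    hence "(Qinf ** (PT - T *\<^sub>R (mexp D T ** Bt ** transpose Bt ** mexp D T))) $ i $ i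
        = - ((Qinf ** D) ** R1) $ i $ i - (D ** (Qinf ** R1)) $ i $ i"
      by (simp only: d2 vector_minus_component vector_uminus_component)
    also have "\<dots> = - ((Qinf ** D + D ** Qinf) ** R1) $ i $ i"
      by (simp add: matrix_add_rdistrib matrix_mul_assoc)
    also have "\<dots> = (transpose Ct ** Ct ** R1) $ i $ i"
    proof -
      have "Qinf ** D + D ** Qinf = - (transpose Ct ** Ct)" using Qinf_eq by (simp add: add.commute)
      thus ?thesis by (simp add: matrix_neg_rdistrib)
    qed
    finally have R: "(Qinf ** (PT - T *\<^sub>R (mexp D T ** Bt ** transpose Bt ** mexp D T))) $ i $ i
        = (transpose Ct ** Ct ** R1) $ i $ i" .
    show ?thesis using L R Hii[of i] by (simp add: H_def)
  qed
  show ?thesis using c1 c2 c3 by simp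
qed

end
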